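(* In the model described in the context (for any $n>2$, any $\mu\in(0,1)$, any finite set $Q$ of full-support conditional distributions, any collection $\mathcal{R}$ of admissible DAGs, any ideal policy $d^*\in D$ and any symmetric convex cost function $C$ with $C(0)=C'(0)=0$), an equilibrium $(\alpha,\sigma)$ exists.
   Context: Let $n>2$ and $X=X_1\times\cdots\times X_n$ with $X_i=\{0,1\}$. For $x\in X$, write $a=x_1$ (action) and $y=x_n$ (consequence). For $N\subseteq\{1,\dots,n\}$, $X_N=\times_{i\in N}X_i$. Let $Q$ be a finite set of conditional distributions of $(x_2,\dots,x_{n-1})$ given $(x_1,x_n)$, each with full support for every $(x_1,x_n)$. For $\alpha,\mu\in(0,1)$, $P_{\alpha,\mu}$ is the set of distributions $p$ on $X$ with $p(a=1)=\alpha$, $p(y=1\mid a)=\mu$ for both values of $a$, and $p(\cdot\mid x_1,x_n)\in Q$. A DAG is a pair $(N,R)$ with $N\subseteq\{1,\dots,n\}$ and $R\subseteq N\times N$ acyclic; $R(i)=\{j\in N: jRi\}$. $\mathcal{R}$ is a (finite) collection of DAGs $(N,R)$ with $\{1,n\}\subseteq N$ and no directed path from $n$ to $1$. A narrative is a pair $s=(p,R)\in P_{\alpha,\mu}\times\mathcal{R}$; it induces $p_R(x_N)=\prod_{i\in N}p(x_i\mid x_{R(i)})$, and $p_R(y\mid a)$ is the conditional derived from $p_R$. Let $D=[\varepsilon,1-\varepsilon]$ for a small $\varepsilon>0$ (policies $d$ = proposed frequency of $a=1$). Gross anticipatory utility: $V(s,d\mid\alpha)=d\,p_R(y=1\mid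 a=1)+(1-d)\,p_R(y=1\mid a=0)$. With ideal policy $d^*\in D$ and a symmetric convex cost function $C$ with $C(0)=C'(0)=0$, net anticipatory utility is $U(s,d\mid\alpha)=V(s,d\mid\alpha)-C(d-d^* )$. An equilibrium is a pair of $\alpha\in[0,1]$ and a probability distribution $\sigma$ over narrative-policy pairs $(s,d)\in P_{\alpha,\mu}\times\mathcal{R}\times D$ such that every element of the support of $\sigma$ maximizes $U(s,d\mid\alpha)$ over $P_{\alpha,\mu}\times\mathcal{R}\times D$, and $\alpha=\sum_{(s,d)}\sigma(s,d)\,d$. *)

theory Defs
  imports "HOL-Probability.Probability"
begin

(* Coordinate 1 is the action a,
  coordinate n the consequence y; True encodes the value 1. *)

definition Xs :: "nat set \<Rightarrow> (nat \<Rightarrow> bool) set" where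
  "Xs N = (N \<rightarrow>\<^sub>E (UNIV :: bool set))"

definition marg :: "nat \<Rightarrow> ((nat \<Rightarrow> bool) \<Rightarrow> real) \<Rightarrow> nat set \<Rightarrow> (nat \<Rightarrow> bool) \<Rightarrow> real" where
  "marg n p S z = (\<Sum>x\<in>Xs {1..n}. if (\<forall>i\<in>S. x i = z i) then p x else 0)"

definition cond :: "nat \<Rightarrow> ((nat \<Rightarrow> bool) \<Rightarrow> real) \<Rightarrow> nat \<Rightarrow> nat set \<Rightarrow> (nat \<Rightarrow> bool) \<Rightarrow> real" where
  "cond n p i S z = marg n p (insert i S) z / marg n p S z"

definition parents :: "(nat \<times> nat) set \<Rightarrow> nat set \<Rightarrow> nat \<Rightarrow> nat set" where
  "parents R N i = {j \<in> N. (j, i) \<in> R}"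

definition factorized :: "nat \<Rightarrow> ((nat \<Rightarrow> bool) \<Rightarrow> real) \<Rightarrow> nat set \<Rightarrow> (nat \<times> nat) set \<Rightarrow> (nat \<Rightarrow> bool) \<Rightarrow> real" where
  "factorized n p N R z = (\<Prod>i\<in>N. cond n p i (parents R N i) z)"

definition pR_y1_given_a :: "nat \<Rightarrow> ((nat \<Rightarrow> bool) \<Rightarrow> real) \<Rightarrow> nat set \<Rightarrow> (nat \<times> nat) set \<Rightarrow> bool \<Rightarrow> real" where
  "pR_y1_given_a n p N R a0 =
     (\<Sum>z\<in>{z \<in> Xs N. z 1 = a0 \<and> z n}. factorized n p N R z) /
     (\<Sum>z\<in>{z \<in> Xs N. z 1 = a0}. factorized n p N R z)"

definition V :: "nat \<Rightarrow> ((nat \<Rightarrow> bool) \<Rightarrow> real) \<Rightarrow> nat set \<times> (nat \<times> nat) set \<Rightarrow> real \<Rightarrow> real" where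
  "V n p G d = (case G of (N, R) \<Rightarrow>
      d * pR_y1_given_a n p N R True + (1 - d) * pR_y1_given_a n p N R False)"

definition U :: "nat \<Rightarrow> (real \<Rightarrow> real) \<Rightarrow> real \<Rightarrow> ((nat \<Rightarrow> bool) \<Rightarrow> real) \<Rightarrow> nat set \<times> (nat \<times> nat) set \<Rightarrow> real \<Rightarrow> real" where
  "U n C dstar p G d = V n p G d - C (d - dstar)"

definition full_support_cond :: "nat \<Rightarrow> (bool \<Rightarrow> bool \<Rightarrow> (nat \<Rightarrow> bool) \<Rightarrow> real) \<Rightarrow> bool" where
  "full_support_cond n q \<longleftrightarrow>
     (\<forall>a y. (\<forall>z\<in>Xs {2..n-1}. q a y z > 0) \<and> (\<Sum>z\<in>Xs {2..n-1}. q a y z) = 1)"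

(* P_{alpha,mu}: p(a=1)=alpha, p(y=1|a)=mu for both a, p(.|x_1,x_n) \<in> Q,
  written out as the factorization p(x) = p(a) p(y|a) q(x_2..x_{n-1} | a, y). *)
definition Pset :: "nat \<Rightarrow> (bool \<Rightarrow> bool \<Rightarrow> (nat \<Rightarrow> bool) \<Rightarrow> real) set \<Rightarrow> real \<Rightarrow> real
                     \<Rightarrow> ((nat \<Rightarrow> bool) \<Rightarrow> real) set" where
  "Pset n Q \<alpha> \<mu> = {p. \<exists>q\<in>Q. p = (\<lambda>x. if x \<in> Xs {1..n}
        then (if x 1 then \<alpha> else 1 - \<alpha>) * (if x n then \<mu> else 1 - \<mu>)
             * q (x 1) (x n) (restrict x {2..n-1})
        else 0)}"

definition admissible_dag :: "nat \<Rightarrow> nat set \<times> (nat \<times> nat) set \<Rightarrow> bool" where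
  "admissible_dag n G = (case G of (N, R) \<Rightarrow>
      N \<subseteq> {1..n} \<and> R \<subseteq> N \<times> N \<and> acyclic R \<and> {1, n} \<subseteq> N \<and> (n, 1) \<notin> R\<^sup>+)"

(* Equilibrium (alpha, sigma); sigma is a probability distribution over
  narrative-policy pairs ((p,(N,R)), d), encoded as triples (p,(N,R),d). *)
definition equilibrium :: "nat \<Rightarrow> (bool \<Rightarrow> bool \<Rightarrow> (nat \<Rightarrow> bool) \<Rightarrow> real) set
      \<Rightarrow> (nat set \<times> (nat \<times> nat) set) set \<Rightarrow> real \<Rightarrow> real \<Rightarrow> (real \<Rightarrow> real) \<Rightarrow> real
      \<Rightarrow> real \<Rightarrow> (((nat \<Rightarrow> bool) \<Rightarrow> real) \<times> (nat set \<times> (nat \<times> nat) set) \<times> real) pmf \<Rightarrow> bool" where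
  "equilibrium n Q Rs \<mu> \<epsilon> C dstar \<alpha> \<sigma> \<longleftrightarrow>
     \<alpha> \<in> {0..1} \<and>
     (\<forall>(p, G, d) \<in> set_pmf \<sigma>.
        p \<in> Pset n Q \<alpha> \<mu> \<and> G \<in> Rs \<and> d \<in> {\<epsilon>..1 - \<epsilon>} \<and>
        (\<forall>p' \<in> Pset n Q \<alpha> \<mu>. \<forall>G' \<in> Rs. \<forall>d' \<in> {\<epsilon>..1 - \<epsilon>}.
            U n C dstar p' G' d' \<le> U n C dstar p G d)) \<and>
     \<alpha> = measure_pmf.expectation \<sigma> (\<lambda>(p, G, d). d)"

end

theory Submission imports Defs begin

definition pq :: "nat \<Rightarrow> real \<Rightarrow> (bool \<Rightarrow> bool \<Rightarrow> (nat \<Rightarrow> bool) \<Rightarrow> real) \<Rightarrow> real \<Rightarrow> (nat \<Rightarrow> bool) \<Rightarrow> real" where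
  "pq n \<mu> q \<alpha> = (\<lambda>x. if x \<in> Xs {1..n}
        then (if x 1 then \<alpha> else 1 - \<alpha>) * (if x n then \<mu> else 1 - \<mu>)
             * q (x 1) (x n) (restrict x {2..n-1})
        else 0)"

lemma Pset_eq: "Pset n Q \<alpha> \<mu> = (\<lambda>q. pq n \<mu> q \<alpha>) ` Q"
  by (auto simp: Pset_def pq_def)

lemma cont_if_const[continuous_intros]:
  "continuous_on I f \<Longrightarrow> continuous_on I g \<Longrightarrow> continuous_on I (\<lambda>a. if c then f a else g a)"
  by (cases c) auto

lemma pq_pos:
  assumes "0 < \<alpha>" "\<alpha> < 1" "0 < \<mu>" "\<mu> < 1" "full_support_cond n q" "x \<in> Xs {1..n}"
  shows "pq n \<mu> q \<alpha> x > 0"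
proof -
  have "restrict x {2..n-1} \<in> Xs {2..n-1}" by (simp add: Xs_def restrict_PiE_iff)
  then have "q (x 1) (x n) (restrict x {2..n-1}) > 0" using assms(5) by (simp add: full_support_cond_def)
  then show ?thesis using assms by (simp add: pq_def)
qed

lemma finite_Xs: "finite N \<Longrightarrow> finite (Xs N)" by (simp add: Xs_def finite_PiE)

lemma marg_pos:
  assumes "S \<subseteq> {1..n}" "\<forall>x\<in>Xs {1..n}. p x > 0"
  shows "marg n p S z > 0"
proof -
  let ?x0 = "\<lambda>i. if i \<in> {1..n} then z i else undefined"
  have x0: "?x0 \<in> Xs {1..n}" by (simp add: Xs_def PiE_iff extensional_def)
  show ?thesis unfolding marg_def
    apply (rule sum_pos2[OF finite_Xs x0])
    using assms x0 by (auto intro: less_imp_le)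
qed

lemma cond_pos:
  assumes "i \<in> {1..n}" "S \<subseteq> {1..n}" "\<forall>x\<in>Xs {1..n}. p x > 0"
  shows "cond n p i S z > 0"
  using assms marg_pos[of S n p z] marg_pos[of "insert i S" n p z] by (simp add: cond_def)

lemma factorized_pos:
  assumes "N \<subseteq> {1..n}" "\<forall>x\<in>Xs {1..n}. p x > 0"
  shows "factorized n p N R z > 0"
  unfolding factorized_def
  apply (rule prod_pos)
  using assms by (intro cond_pos) (auto simp: parents_def)

lemma den_pos:
  assumes "N \<subseteq> {1..n}" "1 \<in> N" "\<forall>x\<in>Xs {1..n}. p x > 0"
  shows "(\<Sum>z\<in>{z \<in> Xs N. z 1 = b}. factorized n p N R z) > 0"
proof -
  have fin: "finite N" using assms(1) finite_subset by blast
  have z0: "restrict (\<lambda>_. b) N \<in> {z \<in> Xs N. z 1 = b}" using assms(2) by (simp add: Xs_def)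
  show ?thesis
    apply (rule sum_pos2[OF _ z0])
    using fin factorized_pos[OF assms(1,3)] by (auto simp: finite_Xs intro: less_imp_le)
qed

lemma cont_marg:
  assumes "\<And>x. continuous_on I (\<lambda>a. P a x)"
  shows "continuous_on I (\<lambda>a. marg n (P a) S z)"
  unfolding marg_def by (intro continuous_on_sum cont_if_const continuous_on_const assms)

lemma cont_cond:
  assumes "\<And>x. continuous_on I (\<lambda>a. P a x)" "\<forall>a\<in>I. \<forall>x\<in>Xs {1..n}. P a x > 0"
    "i \<in> {1..n}" "S \<subseteq> {1..n}"
  shows "continuous_on I (\<lambda>a. cond n (P a) i S z)"
  unfolding cond_def
  apply (intro continuous_on_divide cont_marg assms)
proof
  fix a assume "a \<in> I"
  then have "marg n (P a) S z > 0" using assms(2,4) by (intro marg_pos) auto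
  then show "marg n (P a) S z \<noteq> 0" by simp
qed

lemma cont_pR:
  assumes "\<And>x. continuous_on I (\<lambda>a. P a x)" "\<forall>a\<in>I. \<forall>x\<in>Xs {1..n}. P a x > 0"
    "N \<subseteq> {1..n}" "1 \<in> N"
  shows "continuous_on I (\<lambda>a. pR_y1_given_a n (P a) N R b)"
  unfolding pR_y1_given_a_def
proof (intro continuous_on_divide)
  have *: "continuous_on I (\<lambda>a. factorized n (P a) N R z)" for z
    unfolding factorized_def
    apply (intro continuous_on_prod cont_cond assms)
    using assms by (auto simp: parents_def)
  show "continuous_on I (\<lambda>a. \<Sum>z\<in>{z \<in> Xs N. z 1 = b \<and> z n}. factorized n (P a) N R z)"
    by (intro continuous_on_sum *)
  show "continuous_on I (\<lambda>a. \<Sum>z\<in>{z \<in> Xs N. z 1 = b}. factorized n (P a) N R z)"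
    by (intro continuous_on_sum *)
  show "\<forall>a\<in>I. (\<Sum>z\<in>{z \<in> Xs N. z 1 = b}. factorized n (P a) N R z) \<noteq> 0"
  proof
    fix a assume "a \<in> I"
    then have "(\<Sum>z\<in>{z \<in> Xs N. z 1 = b}. factorized n (P a) N R z) > 0"
      using assms(2-4) by (intro den_pos) auto
    then show "(\<Sum>z\<in>{z \<in> Xs N. z 1 = b}. factorized n (P a) N R z) \<noteq> 0" by simp
  qed
qed

lemma cont_pq: "continuous_on I (\<lambda>a. pq n \<mu> q a x)"
  unfolding pq_def by (intro cont_if_const continuous_on_mult continuous_on_const continuous_on_id continuous_on_diff)

lemma U_eq: "U n C dstar p (N, R) d =
   d * pR_y1_given_a n p N R True + (1 - d) * pR_y1_given_a n p N R False - C (d - dstar)"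
  by (simp add: U_def V_def)

lemma finite_max: "finite K \<Longrightarrow> K \<noteq> {} \<Longrightarrow> \<exists>k\<in>K. \<forall>k'\<in>K. (f k' :: real) \<le> f k"
proof -
  assume fK: "finite K" and ne: "K \<noteq> {}"
  have "Max (f ` K) \<in> f ` K" using fK ne by (intro Max_in) auto
  then obtain k where k: "k \<in> K" "f k = Max (f ` K)" by auto
  have "\<forall>k'\<in>K. f k' \<le> f k" using fK k(2) by (auto intro: Max_ge)
  then show ?thesis using k(1) by blast
qed

theorem proposition1:
  fixes n :: nat and \<mu> \<epsilon> dstar :: real
    and Q :: "(bool \<Rightarrow> bool \<Rightarrow> (nat \<Rightarrow> bool) \<Rightarrow> real) set"
    and Rs :: "(nat set \<times> (nat \<times> nat) set) set"
    and C :: "real \<Rightarrow> real"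
  assumes "n > 2"
    and "0 < \<mu>" "\<mu> < 1"
    and "finite Q" "Q \<noteq> {}" "\<forall>q\<in>Q. full_support_cond n q"
    and "finite Rs" "Rs \<noteq> {}" "\<forall>G\<in>Rs. admissible_dag n G"
    and "0 < \<epsilon>" "\<epsilon> < 1/2"
    and "dstar \<in> {\<epsilon>..1 - \<epsilon>}"
    and "\<forall>x. C (- x) = C x" "convex_on UNIV C" "C 0 = 0" "(C has_real_derivative 0) (at 0)"
  shows "\<exists>\<alpha> \<sigma>. equilibrium n Q Rs \<mu> \<epsilon> C dstar \<alpha> \<sigma>"
proof -
  define D where "D = {\<epsilon>..1 - \<epsilon>}"
  define K where "K = Q \<times> Rs"
  define \<Phi> where "\<Phi> k a d = U n C dstar (pq n \<mu> (fst k) a) (snd k) d" for k a d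
  have finK: "finite K" and neK: "K \<noteq> {}" using assms by (auto simp: K_def)
  have cD: "compact D" and neD: "D \<noteq> {}" and clD: "closed D" using assms by (auto simp: D_def)
  have D01: "0 < a \<and> a < 1" if "a \<in> D" for a using that assms by (auto simp: D_def)
  have contC: "continuous_on UNIV C" using convex_on_continuous[OF open_UNIV assms(14)] .
  have contA: "continuous_on D (\<lambda>a. pR_y1_given_a n (pq n \<mu> (fst k) a) (fst (snd k)) (snd (snd k)) b)"
    if "k \<in> K" for k b
  proof -
    obtain q N R where k: "k = (q, (N, R))" by (metis prod.collapse)
    have q: "full_support_cond n q" and G: "admissible_dag n (N, R)"
      using that assms(6,9) unfolding K_def k by auto
    have "N \<subseteq> {1..n}" "1 \<in> N" using G by (auto simp: admissible_dag_def)
    moreover have "\<forall>a\<in>D. \<forall>x\<in>Xs {1..n}. pq n \<mu> q a x > 0"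
      using pq_pos D01 assms q by blast
    ultimately have "continuous_on D (\<lambda>a. pR_y1_given_a n (pq n \<mu> q a) N R b)"
      by (intro cont_pR cont_pq) auto
    then show ?thesis unfolding k by simp
  qed
  have contPhi: "continuous_on S (\<lambda>x. \<Phi> k (g x) (h x))"
    if "k \<in> K" "continuous_on S g" "continuous_on S h" "g ` S \<subseteq> D" for k S g h
  proof -
    obtain q N R where k: "k = (q, (N, R))" by (metis prod.collapse)
    have cA: "continuous_on S (\<lambda>x. pR_y1_given_a n (pq n \<mu> q (g x)) N R b)" for b
    proof -
      show ?thesis using continuous_on_compose2[OF contA[OF that(1), of b] that(2,4)] by (simp add: k)
    qed
    have cC: "continuous_on S (\<lambda>x. C (h x - dstar))"
    proof -
      have "continuous_on S (\<lambda>x. h x - dstar)" using that(3) by (intro continuous_on_diff continuous_on_const)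
      then show ?thesis using continuous_on_compose2[OF contC, of S "\<lambda>x. h x - dstar"] by simp
    qed
    have eq: "(\<lambda>x. \<Phi> k (g x) (h x)) = (\<lambda>x. h x * pR_y1_given_a n (pq n \<mu> q (g x)) N R True
       + (1 - h x) * pR_y1_given_a n (pq n \<mu> q (g x)) N R False - C (h x - dstar))"
      by (simp add: \<Phi>_def k U_eq)
    show ?thesis unfolding eq
      by (intro continuous_on_diff continuous_on_add continuous_on_mult continuous_on_const cA cC that(3))
  qed
  define Sk where "Sk k = {x \<in> D \<times> D. \<forall>k'\<in>K. \<forall>d'\<in>D. \<Phi> k' (fst x) d' \<le> \<Phi> k (fst x) (snd x)}" for k
  have clSk: "closed (Sk k)" if "k \<in> K" for k
  proof -
    have "Sk k = (D \<times> D) \<inter> (\<Inter>kd\<in>K \<times> D. {x \<in> D \<times> D. \<Phi> (fst kd) (fst x) (snd kd) \<le> \<Phi> k (fst x) (snd x)})"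
      by (auto simp: Sk_def)
    moreover have "closed {x \<in> D \<times> D. \<Phi> (fst kd) (fst x) (snd kd) \<le> \<Phi> k (fst x) (snd x)}"
      if "kd \<in> K \<times> D" for kd
    proof (rule continuous_on_closed_Collect_le)
      have fD: "fst ` (D \<times> D) \<subseteq> D" by auto
      have cf: "continuous_on (D \<times> D) fst" using continuous_on_fst[OF continuous_on_id] by simp
      have cs: "continuous_on (D \<times> D) snd" using continuous_on_snd[OF continuous_on_id] by simp
      show "continuous_on (D \<times> D) (\<lambda>x. \<Phi> (fst kd) (fst x) (snd kd))"
        using contPhi[of "fst kd" "D \<times> D" fst "\<lambda>_. snd kd"] that fD cf by auto
      show "continuous_on (D \<times> D) (\<lambda>x. \<Phi> k (fst x) (snd x))"
        using contPhi[of k "D \<times> D" fst snd] \<open>k \<in> K\<close> fD cf cs by auto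
      show "closed (D \<times> D)" using clD by (intro closed_Times)
    qed
    ultimately show ?thesis using clD by (auto intro!: closed_Int closed_INT closed_Times)
  qed
  have cpSk: "compact (Sk k \<inter> {x. P (fst x) (snd x)})" if "k \<in> K" "closed {x. P (fst x) (snd x)}" for k P
  proof -
    have "Sk k \<inter> {x. P (fst x) (snd x)} = (D \<times> D) \<inter> (Sk k \<inter> {x. P (fst x) (snd x)})"
      by (auto simp: Sk_def)
    moreover have "compact ((D \<times> D) \<inter> (Sk k \<inter> {x. P (fst x) (snd x)}))"
      by (intro compact_Int_closed compact_Times cD closed_Int clSk that)
    ultimately show ?thesis by simp
  qed
  have ex: "\<exists>k\<in>K. \<exists>d\<in>D. (a, d) \<in> Sk k" if "a \<in> D" for a
  proof -
    have "\<exists>d\<in>D. \<forall>d'\<in>D. \<Phi> k a d' \<le> \<Phi> k a d" if "k \<in> K" for k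
      apply (rule continuous_attains_sup[OF cD neD])
      using contPhi[OF that, of D "\<lambda>_. a" "\<lambda>x. x"] \<open>a \<in> D\<close> by (auto intro: continuous_intros)
    then have "\<forall>k\<in>K. \<exists>d. d \<in> D \<and> (\<forall>d'\<in>D. \<Phi> k a d' \<le> \<Phi> k a d)" by blast
    then have "\<exists>g. \<forall>k\<in>K. g k \<in> D \<and> (\<forall>d'\<in>D. \<Phi> k a d' \<le> \<Phi> k a (g k))" by (rule bchoice)
    then obtain g where g: "\<And>k. k \<in> K \<Longrightarrow> g k \<in> D \<and> (\<forall>d'\<in>D. \<Phi> k a d' \<le> \<Phi> k a (g k))"
      by blast
    obtain k where k: "k \<in> K" "\<forall>k'\<in>K. \<Phi> k' a (g k') \<le> \<Phi> k a (g k)"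
      using finite_max[OF finK neK, of "\<lambda>k. \<Phi> k a (g k)"] by blast
    have "\<Phi> k' a d' \<le> \<Phi> k a (g k)" if "k' \<in> K" "d' \<in> D" for k' d'
      using g[OF that(1)] k(2) that by (meson order_trans)
    then have "(a, g k) \<in> Sk k" unfolding Sk_def using g k \<open>a \<in> D\<close> by auto
    then show ?thesis using k g by blast
  qed
  define L where "L = (\<Union>k\<in>K. fst ` (Sk k \<inter> {x. fst x \<le> snd x}))"
  define Rr where "Rr = (\<Union>k\<in>K. fst ` (Sk k \<inter> {x. snd x \<le> fst x}))"
  have clL: "closed L" unfolding L_def
  proof (intro closed_UN finK ballI)
    fix k assume "k \<in> K"
    have "closed {x::real\<times>real. fst x \<le> snd x}" by (intro closed_Collect_le continuous_intros)
    then have "compact (Sk k \<inter> {x. fst x \<le> snd x})" using cpSk[of k "\<lambda>a d. a \<le> d"] \<open>k \<in> K\<close> by simp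
    then show "closed (fst ` (Sk k \<inter> {x. fst x \<le> snd x}))"
      by (intro compact_imp_closed compact_continuous_image continuous_intros)
  qed
  have clR: "closed Rr" unfolding Rr_def
  proof (intro closed_UN finK ballI)
    fix k assume "k \<in> K"
    have "closed {x::real\<times>real. snd x \<le> fst x}" by (intro closed_Collect_le continuous_intros)
    then have "compact (Sk k \<inter> {x. snd x \<le> fst x})" using cpSk[of k "\<lambda>a d. d \<le> a"] \<open>k \<in> K\<close> by simp
    then show "closed (fst ` (Sk k \<inter> {x. snd x \<le> fst x}))"
      by (intro compact_imp_closed compact_continuous_image continuous_intros)
  qed
  have inL: "a \<in> L" if "k \<in> K" "(a, d) \<in> Sk k" "a \<le> d" for a d k
  proof -
    have "a \<in> fst ` (Sk k \<inter> {x. fst x \<le> snd x})" by (rule rev_image_eqI[of "(a,d)"]) (use that in auto)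
    then show ?thesis unfolding L_def using that(1) by blast
  qed
  have inR: "a \<in> Rr" if "k \<in> K" "(a, d) \<in> Sk k" "d \<le> a" for a d k
  proof -
    have "a \<in> fst ` (Sk k \<inter> {x. snd x \<le> fst x})" by (rule rev_image_eqI[of "(a,d)"]) (use that in auto)
    then show ?thesis unfolding Rr_def using that(1) by blast
  qed
  have cov: "D \<subseteq> L \<union> Rr"
  proof
    fix a assume "a \<in> D"
    then obtain k d where "k \<in> K" "d \<in> D" "(a, d) \<in> Sk k" using ex by blast
    then show "a \<in> L \<union> Rr" using inL inR by (cases "a \<le> d") auto
  qed
  have epsD: "\<epsilon> \<in> D" and eps1D: "1 - \<epsilon> \<in> D" using assms by (auto simp: D_def)
  have "L \<inter> D \<noteq> {}"
  proof -
    obtain k d where "k \<in> K" "d \<in> D" "(\<epsilon>, d) \<in> Sk k" using ex[OF epsD] by blast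
    moreover have "\<epsilon> \<le> d" using \<open>d \<in> D\<close> by (simp add: D_def)
    ultimately have "\<epsilon> \<in> L" using inL by blast
    then show ?thesis using epsD by blast
  qed
  moreover have "Rr \<inter> D \<noteq> {}"
  proof -
    obtain k d where "k \<in> K" "d \<in> D" "(1 - \<epsilon>, d) \<in> Sk k" using ex[OF eps1D] by blast
    moreover have "d \<le> 1 - \<epsilon>" using \<open>d \<in> D\<close> by (simp add: D_def)
    ultimately have "1 - \<epsilon> \<in> Rr" using inR by blast
    then show ?thesis using eps1D by blast
  qed
  moreover have "connected D" by (simp add: D_def)
  ultimately have "L \<inter> Rr \<inter> D \<noteq> {}" using connected_closed[of D] clL clR cov by blast
  then obtain a where aD: "a \<in> D" and aL: "a \<in> L" and aR: "a \<in> Rr" by blast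
  obtain k1 x1 where "k1 \<in> K" "x1 \<in> Sk k1" "fst x1 \<le> snd x1" "a = fst x1"
    using aL unfolding L_def by blast
  then have k1: "k1 \<in> K" "(a, snd x1) \<in> Sk k1" "a \<le> snd x1" by auto
  obtain k2 x2 where "k2 \<in> K" "x2 \<in> Sk k2" "snd x2 \<le> fst x2" "a = fst x2"
    using aR unfolding Rr_def by blast
  then have k2: "k2 \<in> K" "(a, snd x2) \<in> Sk k2" "snd x2 \<le> a" by auto
  define d1 where "d1 = snd x1"
  define d2 where "d2 = snd x2"
  note k1 = k1[folded d1_def] and k2 = k2[folded d2_def]
  define w where "w = (if d1 = d2 then 1 else (a - d2) / (d1 - d2))"
  have wboth: "(0 \<le> w \<and> w \<le> 1) \<and> d1 * w + d2 * (1 - w) = a"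
  proof (cases "d1 = d2")
    case True
    then show ?thesis using k1(3) k2(3) by (auto simp: w_def)
  next
    case False
    then have pos: "d1 - d2 > 0" using k1(3) k2(3) by auto
    have w: "w = (a - d2) / (d1 - d2)" using False by (simp add: w_def)
    have A: "0 \<le> w \<and> w \<le> 1" unfolding w using pos k1(3) k2(3) by (simp add: divide_le_eq)
    have "d1 * w + d2 * (1 - w) = d2 + (d1 - d2) * w" by (simp add: algebra_simps)
    also have "\<dots> = a" unfolding w using pos by simp
    finally show ?thesis using A by blast
  qed
  then have w01: "0 \<le> w \<and> w \<le> 1" and wa: "d1 * w + d2 * (1 - w) = a" by auto
  define t where "t b = (if b then (pq n \<mu> (fst k1) a, snd k1, d1) else (pq n \<mu> (fst k2) a, snd k2, d2))" for b
  define \<sigma> where "\<sigma> = map_pmf t (bernoulli_pmf w)"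
  have "equilibrium n Q Rs \<mu> \<epsilon> C dstar a \<sigma>"
    unfolding equilibrium_def
  proof (intro conjI ballI)
    show "a \<in> {0..1}" using D01[OF aD] by simp
    show "a = measure_pmf.expectation \<sigma> (\<lambda>(p, G, d). d)"
      using w01 wa by (simp add: \<sigma>_def t_def integral_bernoulli_pmf)
    fix x assume "x \<in> set_pmf \<sigma>"
    then obtain b where x: "x = t b" by (auto simp: \<sigma>_def)
    obtain k d where kd: "k \<in> K" "(a, d) \<in> Sk k" and xt: "x = (pq n \<mu> (fst k) a, snd k, d)"
    proof (cases b)
      case True then show ?thesis using that[of k1 d1] x k1 by (simp add: t_def)
    next
      case False then show ?thesis using that[of k2 d2] x k2 by (simp add: t_def)
    qed
    have dD: "d \<in> D" and opt: "\<And>k' d'. k' \<in> K \<Longrightarrow> d' \<in> D \<Longrightarrow> \<Phi> k' a d' \<le> \<Phi> k a d"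
      using kd(2) unfolding Sk_def by auto
    have "U n C dstar p' G' d' \<le> U n C dstar (pq n \<mu> (fst k) a) (snd k) d"
      if hp: "p' \<in> Pset n Q a \<mu>" "G' \<in> Rs" "d' \<in> {\<epsilon>..1 - \<epsilon>}" for p' G' d'
    proof -
      obtain q' where q': "q' \<in> Q" "p' = pq n \<mu> q' a" using hp(1) unfolding Pset_eq by blast
      have "\<Phi> (q', G') a d' \<le> \<Phi> k a d" using opt[of "(q', G')" d'] q' hp by (simp add: K_def D_def)
      then show ?thesis by (simp add: \<Phi>_def q')
    qed
    moreover have "pq n \<mu> (fst k) a \<in> Pset n Q a \<mu>" "snd k \<in> Rs"
      using kd(1) unfolding Pset_eq K_def by auto
    ultimately show "case x of (p, G, d) \<Rightarrow>
        p \<in> Pset n Q a \<mu> \<and> G \<in> Rs \<and> d \<in> {\<epsilon>..1 - \<epsilon>} \<and>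
        (\<forall>p' \<in> Pset n Q a \<mu>. \<forall>G' \<in> Rs. \<forall>d' \<in> {\<epsilon>..1 - \<epsilon>}.
            U n C dstar p' G' d' \<le> U n C dstar p G d)"
      using dD unfolding xt by (simp add: D_def)
  qed
  then show ?thesis by blast
qed

end
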